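(* Let $A=\{v_1,v_2,\dots,v_n\}$ be a set of $n\geq 1$ distinct integers, and let $Y_1,Y_2,Y_3$ be independent random variables, each uniformly distributed on $A$. Set $Y=Y_1+Y_2+Y_3$. Then $$\max_{x\in \mathbb{Z}} \mathbb{P}[Y=x]\leq\frac{3+1/n^2}{4n}.$$ *)

theory Defs
  imports "HOL-Probability.Probability"
begin

end

theory Submission imports Defs begin

lemma rk_mono:
  fixes A :: "int set"
  assumes "finite A" "a \<in> A" "a' \<in> A" "a < a'"
  shows "card {y\<in>A. y < a} < card {y\<in>A. y < a'}"
proof -
  have "{y\<in>A. y < a} \<subseteq> {y\<in>A. y < a'}" using assms(4) by (simp add: Collect_mono_iff)
  moreover have "a \<in> {y\<in>A. y < a'}" "a \<notin> {y\<in>A. y < a}" using assms(2,4) by simp_all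
  ultimately have "{y\<in>A. y < a} \<subset> {y\<in>A. y < a'}" by blast
  moreover have "finite {y\<in>A. y < a'}" using assms(1) by simp
  ultimately show ?thesis by (rule psubset_card_mono[rotated])
qed

lemma rk_bij:
  fixes A :: "int set"
  assumes "finite A" "card A = n"
  shows "bij_betw (\<lambda>a. card {y\<in>A. y < a}) A {0..<n}"
proof -
  let ?r = "\<lambda>a. card {y\<in>A. y < a}"
  have inj: "inj_on ?r A"
  proof (rule inj_onI)
    fix a a' assume "a \<in> A" "a' \<in> A" "?r a = ?r a'"
    then show "a = a'"
    proof (cases a a' rule: linorder_cases)
      case less
      then show ?thesis using rk_mono[OF assms(1) \<open>a \<in> A\<close> \<open>a' \<in> A\<close>] \<open>?r a = ?r a'\<close> by simp
    next
      case greater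
      then show ?thesis using rk_mono[OF assms(1) \<open>a' \<in> A\<close> \<open>a \<in> A\<close>] \<open>?r a = ?r a'\<close> by simp
    qed
  qed
  have sub: "?r ` A \<subseteq> {0..<n}"
  proof
    fix k assume "k \<in> ?r ` A"
    then obtain a where a: "a \<in> A" "k = ?r a" by blast
    have "{y\<in>A. y < a} \<subset> A" using a by auto
    then have "?r a < card A" using assms(1) by (intro psubset_card_mono) auto
    then show "k \<in> {0..<n}" using a assms by auto
  qed
  have "card (?r ` A) = n" using card_image[OF inj] assms by simp
  then have "?r ` A = {0..<n}" using sub by (intro card_subset_eq) auto
  then show ?thesis using inj by (simp add: bij_betw_def)
qed

lemma filter_card:
  assumes "bij_betw f A B"
  shows "card {a\<in>A. P (f a)} = card {k\<in>B. P k}"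
proof -
  have e: "f ` {a\<in>A. P (f a)} = {k\<in>B. P k}"
    using bij_betw_imp_surj_on[OF assms] by blast
  have i: "inj_on f {a\<in>A. P (f a)}"
    using bij_betw_imp_inj_on[OF assms] by (rule inj_on_subset) blast
  show ?thesis using card_image[OF i] unfolding e by simp
qed

lemma card_split:
  assumes "finite Q"
  shows "card Q = card {p\<in>Q. P p} + card {p\<in>Q. \<not> P p}"
proof -
  have e: "Q = {p\<in>Q. P p} \<union> {p\<in>Q. \<not> P p}" by blast
  have "card ({p\<in>Q. P p} \<union> {p\<in>Q. \<not> P p}) = card {p\<in>Q. P p} + card {p\<in>Q. \<not> P p}"
    by (rule card_Un_disjoint) (use assms in auto)
  then show ?thesis using e by simp
qed

lemma min_strict:
  fixes x x' y y' n :: nat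
  assumes "x < x'" "y' < y" "y < n"
  shows "min x (n - 1 - y) < min x' (n - 1 - y')"
  using assms by (cases "x \<le> n - 1 - y"; cases "x' \<le> n - 1 - y'") (simp_all add: min_def)

lemma count_bound:
  fixes A :: "int set" and x :: int
  assumes "finite A" "card A = n"
  defines "h \<equiv> (n + 1) div 2"
  shows "card {p\<in>A\<times>A. x - fst p - snd p \<in> A} \<le> n * h + (n - h) * (n - h)"
proof -
  define r where "r = (\<lambda>a. card {y\<in>A. y < a})"
  have bij: "bij_betw r A {0..<n}" unfolding r_def by (rule rk_bij[OF assms(1,2)])
  have rmono: "r a < r a'" if "a \<in> A" "a' \<in> A" "a < a'" for a a'
    unfolding r_def using rk_mono[OF assms(1) that] .
  let ?phi = "\<lambda>p. min (r (fst p)) (n - 1 - r (snd p))"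
  let ?Q = "{p\<in>A\<times>A. x - fst p - snd p \<in> A}"
  let ?R1 = "{p\<in>?Q. ?phi p < h}"
  let ?R2 = "{p\<in>?Q. \<not> ?phi p < h}"
  have rlt: "r a < n" if "a \<in> A" for a using bij_betw_apply[OF bij that] by simp
  have fin: "finite ?Q"
  proof (rule finite_subset)
    show "?Q \<subseteq> A \<times> A" by blast
    show "finite (A \<times> A)" using assms(1) by simp
  qed
  have split: "card ?Q = card ?R1 + card ?R2" by (rule card_split[OF fin])
  have c1: "card ?R1 \<le> n * h"
  proof -
    have "inj_on (\<lambda>p. (x - fst p - snd p, ?phi p)) ?R1"
    proof (rule inj_onI)
      fix p q assume p: "p \<in> ?R1" and q: "q \<in> ?R1"
        and eq: "(x - fst p - snd p, ?phi p) = (x - fst q - snd q, ?phi q)"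
      obtain a b where pab: "p = (a, b)" by fastforce
      obtain a' b' where qab: "q = (a', b')" by fastforce
      have s: "a + b = a' + b'" using eq pab qab by auto
      have eqphi: "?phi p = ?phi q" using arg_cong[OF eq, of snd] by (simp only: snd_conv)
      have A: "a \<in> A" "b \<in> A" "a' \<in> A" "b' \<in> A" using p q pab qab by auto
      have "a = a'"
      proof (rule ccontr)
        assume "a \<noteq> a'"
        then consider "a < a'" | "a' < a" by linarith
        then show False
        proof cases
          case 1
          then have "b' < b" using s by linarith
          have "r a < r a'" using rmono[OF A(1,3) 1] .
          moreover have "r b' < r b" using rmono[OF A(4,2) \<open>b' < b\<close>] .
          moreover have "r b < n" using rlt A by auto
          ultimately have "?phi p < ?phi q" unfolding pab qab fst_conv snd_conv by (rule min_strict)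
          then show False using eqphi by linarith
        next
          case 2
          then have "b < b'" using s by linarith
          have "r a' < r a" using rmono[OF A(3,1) 2] .
          moreover have "r b < r b'" using rmono[OF A(2,4) \<open>b < b'\<close>] .
          moreover have "r b' < n" using rlt A by auto
          ultimately have "?phi q < ?phi p" unfolding pab qab fst_conv snd_conv by (rule min_strict)
          then show False using eqphi by linarith
        qed
      qed
      then show "p = q" using s pab qab by auto
    qed
    moreover have "(\<lambda>p. (x - fst p - snd p, ?phi p)) ` ?R1 \<subseteq> A \<times> {0..<h}" by auto
    ultimately have "card ?R1 \<le> card (A \<times> {0..<h})"
      using assms(1) by (intro card_inj_on_le) auto
    then show ?thesis using assms by (simp add: card_cartesian_product)
  qed
  have c2: "card ?R2 \<le> (n - h) * (n - h)"
  proof -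
    have "?R2 \<subseteq> {a\<in>A. h \<le> r a} \<times> {b\<in>A. r b < n - h}"
    proof
      fix p assume p: "p \<in> ?R2"
      then have "snd p \<in> A" by auto
      then have "r (snd p) < n" by (rule rlt)
      moreover have "fst p \<in> A" "x - fst p - snd p \<in> A" "\<not> ?phi p < h" using p by auto
      ultimately have "h \<le> r (fst p)" "r (snd p) < n - h" by linarith+
      then show "p \<in> {a\<in>A. h \<le> r a} \<times> {b\<in>A. r b < n - h}"
        using \<open>fst p \<in> A\<close> \<open>snd p \<in> A\<close> by (simp add: mem_Times_iff)
    qed
    moreover have cX: "card {a\<in>A. h \<le> r a} = n - h"
    proof -
      have "card {a\<in>A. h \<le> r a} = card {k\<in>{0..<n}. h \<le> k}"
        by (rule filter_card[OF bij])
      also have "{k\<in>{0..<n}. h \<le> k} = {h..<n}" by auto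
      finally show ?thesis by simp
    qed
    moreover have cY: "card {b\<in>A. r b < n - h} = n - h"
    proof -
      have "card {a\<in>A. r a < n - h} = card {k\<in>{0..<n}. k < n - h}"
        by (rule filter_card[OF bij])
      also have "{k\<in>{0..<n}. k < n - h} = {0..<n-h}" by auto
      finally show ?thesis by simp
    qed
    moreover have "finite ({a\<in>A. h \<le> r a} \<times> {b\<in>A. r b < n - h})" using assms(1) by auto
    ultimately have "card ?R2 \<le> card ({a\<in>A. h \<le> r a} \<times> {b\<in>A. r b < n - h})"
      using card_mono by blast
    also have "\<dots> = card {a\<in>A. h \<le> r a} * card {b\<in>A. r b < n - h}"
      by (rule card_cartesian_product)
    finally show ?thesis using cX cY by simp
  qed
  show ?thesis using split c1 c2 by linarith
qed

lemma arith_bound: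
  fixes n :: nat
  defines "h \<equiv> (n + 1) div 2"
  shows "4 * (n * h + (n - h) * (n - h)) \<le> 3 * n * n + 1"
proof (cases "even n")
  case True
  then obtain m where m: "n = 2 * m" by blast
  then have "h = m" unfolding h_def by simp
  then show ?thesis using m by (simp add: algebra_simps)
next
  case False
  then obtain m where m: "n = 2 * m + 1" using oddE by blast
  then have "h = m + 1" unfolding h_def by simp
  then show ?thesis using m by (simp add: algebra_simps)
qed

theorem theorem2p4:
  fixes A :: "int set" and n :: nat
  assumes "finite A" and "card A = n" and "n \<ge> 1"
  shows "\<forall>x::int.
    pmf (map_pmf (\<lambda>((y1, y2), y3). y1 + y2 + y3)
           (pair_pmf (pair_pmf (pmf_of_set A) (pmf_of_set A)) (pmf_of_set A))) x
      \<le> (3 + 1 / (real n)^2) / (4 * real n)"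
proof
  fix x :: int
  let ?P = "pmf_of_set A"
  let ?M = "pair_pmf (pair_pmf ?P ?P) ?P"
  let ?f = "\<lambda>((y1::int, y2::int), y3::int). y1 + y2 + y3"
  let ?T = "{t\<in>(A\<times>A)\<times>A. ?f t = x}"
  let ?Q = "{p\<in>A\<times>A. x - fst p - snd p \<in> A}"
  have ne: "A \<noteq> {}" using assms by auto
  have setM: "set_pmf ?M = (A\<times>A)\<times>A" using assms(1) ne by (simp add: set_pair_pmf)
  have finT: "finite ?T" using assms(1) by simp
  have "pmf (map_pmf ?f ?M) x = measure ?M (?f -` {x})" by (rule pmf_map)
  also have "\<dots> = measure ?M (?f -` {x} \<inter> set_pmf ?M)" by (rule measure_Int_set_pmf[symmetric])
  also have "?f -` {x} \<inter> set_pmf ?M = ?T" unfolding setM by auto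
  also have "measure ?M ?T = (\<Sum>t\<in>?T. pmf ?M t)" using finT by (rule measure_measure_pmf_finite)
  also have "\<dots> = (\<Sum>t\<in>?T. 1 / real n ^ 3)"
  proof (rule sum.cong)
    fix t assume "t \<in> ?T"
    then obtain a b c where t: "t = ((a,b),c)" "a \<in> A" "b \<in> A" "c \<in> A" by auto
    show "pmf ?M t = 1 / real n ^ 3" using t assms(1,2) ne by (simp add: pmf_pair power3_eq_cube)
  qed simp
  also have "\<dots> = real (card ?T) / real n ^ 3" by simp
  finally have eq: "pmf (map_pmf ?f ?M) x = real (card ?T) / real n ^ 3" .
  have "card ?T = card ?Q"
  proof (rule bij_betw_same_card[of fst])
    show "bij_betw fst ?T ?Q"
    proof (rule bij_betwI[where g = "\<lambda>p. (p, x - fst p - snd p)"])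
      show "fst \<in> ?T \<rightarrow> ?Q" by auto
      show "(\<lambda>p. (p, x - fst p - snd p)) \<in> ?Q \<rightarrow> ?T" by auto
      show "(fst t, x - fst (fst t) - snd (fst t)) = t" if "t \<in> ?T" for t using that by auto
      show "fst (p, x - fst p - snd p) = p" if "p \<in> ?Q" for p by simp
    qed
  qed
  then have cT0: "card ?T \<le> n * ((n + 1) div 2) + (n - (n + 1) div 2) * (n - (n + 1) div 2)"
    using count_bound[OF assms(1,2), of x] by simp
  have cT: "4 * card ?T \<le> 3 * n * n + 1"
    by (rule le_trans[OF _ arith_bound[of n]]) (use cT0 in simp)
  have npos: "real n > 0" using assms(3) by simp
  have "real (card ?T) / real n ^ 3 \<le> (3 + 1 / (real n)^2) / (4 * real n)"
  proof -
    have "real (4 * card ?T) \<le> real (3 * n * n + 1)" using cT by (rule of_nat_mono)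
    then have c4: "4 * real (card ?T) \<le> 3 * real n * real n + 1" by simp
    have r: "(3 + 1 / (real n)^2) / (4 * real n) = (3 * real n * real n + 1) / (4 * real n ^ 3)"
      using npos by (simp add: field_simps power2_eq_square power3_eq_cube)
    have l: "real (card ?T) / real n ^ 3 = (4 * real (card ?T)) / (4 * real n ^ 3)" by simp
    have "(4 * real (card ?T)) / (4 * real n ^ 3) \<le> (3 * real n * real n + 1) / (4 * real n ^ 3)"
      using c4 npos by (intro divide_right_mono) auto
    then show ?thesis unfolding l r .
  qed
  then show "pmf (map_pmf ?f ?M) x \<le> (3 + 1 / (real n)^2) / (4 * real n)" using eq by simp
qed

end
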